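(* Assume $\ker(K)\cap\ker(D)=\{0\}$. Then for any $\delta\ge 0$ and any reconstructor $\Psi$, the function $\mathcal{J}_{\Psi,\delta}:\mathcal{X}\to\mathbb{R}$, $$\mathcal{J}_{\Psi,\delta}(x)=\|Kx-y^\delta\|_2^2+\lambda\,\|w(\Psi(y^\delta))\odot|Dx|\|_1,$$ is coercive.
   Context: Let $K\in\mathbb{R}^{m\times n}$ with $m\le n$, and let $D_h,D_v\in\mathbb{R}^{n\times n}$ be the discrete horizontal and vertical difference operators; $D:\mathbb{R}^n\to\mathbb{R}^{2n}$, $Dx=\begin{bmatrix}D_hx\\ D_vx\end{bmatrix}$, and $|Dx|\in\mathbb{R}^n$, $(|Dx|)_i=\sqrt{(D_hx)_i^2+(D_vx)_i^2}$. $\mathcal{X}=\{x\in\mathbb{R}^n: x_i\ge 0\ \forall i\}$. Fix $\lambda>0$, $\eta>0$, $p\in(0,1)$, and for $\tilde x\in\mathbb{R}^n$ define weights $(w(\tilde{x}))_i=\big(\eta/\sqrt{\eta^2+(|D\tilde{x}|)_i^2}\big)^{1-p}$. A reconstructor is a Lipschitz continuous map $\Psi:\mathbb{R}^m\to\mathbb{R}^n$. For $\delta\ge0$, $y^\delta\in\mathbb{R}^m$ denotes data $y^\delta=Kx^{GT}+e$ with $x^{GT}\in\mathcal{X}$ and $\|e\|_2\le\delta$. $\odot$ is the entrywise product. *)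

theory Defs
  imports "HOL-Analysis.Analysis"
begin

text \<open>Pixelwise gradient magnitude |Dx|, with D x = (D_h x, D_v x).\<close>
definition absD :: "real^'n^'n \<Rightarrow> real^'n^'n \<Rightarrow> real^'n \<Rightarrow> real^'n" where
  "absD Dh Dv x = (\<chi> i. sqrt (((Dh *v x) $ i)^2 + ((Dv *v x) $ i)^2))"

definition weights :: "real \<Rightarrow> real \<Rightarrow> real^'n^'n \<Rightarrow> real^'n^'n \<Rightarrow> real^'n \<Rightarrow> real^'n" where
  "weights \<eta> p Dh Dv xt =
     (\<chi> i. (\<eta> / sqrt (\<eta>^2 + ((absD Dh Dv xt) $ i)^2)) powr (1 - p))"

definition norm1 :: "real^'n \<Rightarrow> real" where
  "norm1 v = (\<Sum>i\<in>UNIV. \<bar>v $ i\<bar>)"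

definition nonneg_orthant :: "(real^'n) set" where
  "nonneg_orthant = {x. \<forall>i. 0 \<le> x $ i}"

definition Jfun :: "real^'n^'m \<Rightarrow> real^'n^'n \<Rightarrow> real^'n^'n \<Rightarrow> real \<Rightarrow> real \<Rightarrow> real
    \<Rightarrow> (real^'m \<Rightarrow> real^'n) \<Rightarrow> real^'m \<Rightarrow> real^'n \<Rightarrow> real" where
  "Jfun K Dh Dv lam \<eta> p \<Psi> y x =
     (norm (K *v x - y))^2 + lam * norm1 (weights \<eta> p Dh Dv (\<Psi> y) * absD Dh Dv x)"

definition coercive_on :: "'a::real_normed_vector set \<Rightarrow> ('a \<Rightarrow> real) \<Rightarrow> bool" where
  "coercive_on S f \<longleftrightarrow> (\<forall>M. \<exists>R. \<forall>x\<in>S. norm x \<ge> R \<longrightarrow> f x \<ge> M)"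

end

theory Submission
  imports Defs
begin

lemma sum_absD_ge:
  fixes Dh Dv :: "real^'n^'n"
  shows "norm (Dh *v x) + norm (Dv *v x) \<le> 2 * (\<Sum>i\<in>UNIV. absD Dh Dv x $ i)"
proof -
  have pa: "\<bar>(Dh *v x) $ i\<bar> \<le> absD Dh Dv x $ i" for i
    unfolding absD_def by (simp add: real_le_rsqrt)
  have pb: "\<bar>(Dv *v x) $ i\<bar> \<le> absD Dh Dv x $ i" for i
    unfolding absD_def by (simp add: real_le_rsqrt)
  have a: "norm (Dh *v x) \<le> (\<Sum>i\<in>UNIV. absD Dh Dv x $ i)"
    using norm_le_l1_cart[of "Dh *v x"] sum_mono[of UNIV "\<lambda>i. \<bar>(Dh *v x) $ i\<bar>" "\<lambda>i. absD Dh Dv x $ i", OF pa] by linarith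
  have b: "norm (Dv *v x) \<le> (\<Sum>i\<in>UNIV. absD Dh Dv x $ i)"
    using norm_le_l1_cart[of "Dv *v x"] sum_mono[of UNIV "\<lambda>i. \<bar>(Dv *v x) $ i\<bar>" "\<lambda>i. absD Dh Dv x $ i", OF pb] by linarith
  show ?thesis using a b by simp
qed

theorem lemma2:
  fixes K :: "real^'n^'m" and Dh Dv :: "real^'n^'n"
    and lam \<eta> p \<delta> :: real
    and \<Psi> :: "real^'m \<Rightarrow> real^'n"
    and xGT :: "real^'n" and e y\<delta> :: "real^'m"
  assumes "CARD('m) \<le> CARD('n)"
    and "lam > 0" and "\<eta> > 0" and "0 < p" and "p < 1"
    and ker: "\<forall>x. K *v x = 0 \<and> Dh *v x = 0 \<and> Dv *v x = 0 \<longrightarrow> x = 0"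
    and lip: "\<exists>L. L-lipschitz_on UNIV \<Psi>"
    and "\<delta> \<ge> 0"
    and "xGT \<in> nonneg_orthant" and "norm e \<le> \<delta>" and "y\<delta> = K *v xGT + e"
  shows "coercive_on nonneg_orthant (Jfun K Dh Dv lam \<eta> p \<Psi> y\<delta>)"
proof -
  define w where "w = weights \<eta> p Dh Dv (\<Psi> y\<delta>)"
  define c where "c = Min (range (\<lambda>i. w $ i))"
  have wpos: "w $ i > 0" for i
    unfolding w_def weights_def using \<open>\<eta> > 0\<close>
    by (simp add: powr_gt_zero)
  have cpos: "c > 0" unfolding c_def using wpos by (simp add: finite_imageI)
  have cle: "c \<le> w $ i" for i unfolding c_def by (simp add: finite_imageI)
  define f where "f = (\<lambda>x::real^'n. (K *v x, (Dh *v x, Dv *v x)))"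
  have bl: "bounded_linear f" unfolding f_def
    by (intro bounded_linear_Pair matrix_vector_mul_bounded_linear)
  obtain \<epsilon> where ep: "\<epsilon> > 0" and epb: "\<forall>x. norm (f x) \<ge> \<epsilon> * norm x"
  proof -
    have k0: "\<forall>x\<in>UNIV. f x = 0 \<longrightarrow> x = 0"
    proof (intro ballI impI)
      fix x :: "real^'n" assume fx: "f x = 0"
      have "K *v x = 0" using arg_cong[OF fx, of fst] unfolding f_def by simp
      moreover have "Dh *v x = 0" using arg_cong[OF fx, of "\<lambda>z. fst (snd z)"] unfolding f_def by simp
      moreover have "Dv *v x = 0" using arg_cong[OF fx, of "\<lambda>z. snd (snd z)"] unfolding f_def by simp
      ultimately show "x = 0" using ker by blast
    qed
    have "\<exists>e>0. \<forall>x\<in>UNIV. norm (f x) \<ge> e * norm x"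
      by (rule injective_imp_isometric[OF closed_UNIV subspace_UNIV bl k0])
    thus ?thesis using that by blast
  qed
  have nf: "norm (f x) \<le> norm (K *v x) + norm (Dh *v x) + norm (Dv *v x)" for x
    unfolding f_def
    using norm_Pair_le[of "K *v x" "(Dh *v x, Dv *v x)"] norm_Pair_le[of "Dh *v x" "Dv *v x"] by linarith
  define k where "k = min 2 (lam * c / 2)"
  have kpos: "k > 0" unfolding k_def using cpos \<open>lam > 0\<close> by simp
  have main: "Jfun K Dh Dv lam \<eta> p \<Psi> y\<delta> x \<ge> k * \<epsilon> * norm x - 2 * norm y\<delta> - 1" for x
  proof -
    define z where "z = norm (K *v x - y\<delta>)"
    define s where "s = norm (Dh *v x) + norm (Dv *v x)"
    define a where "a = absD Dh Dv x"
    have apos: "a $ i \<ge> 0" for i unfolding a_def absD_def by simp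
    have "norm1 (w * a) = (\<Sum>i\<in>UNIV. w $ i * a $ i)"
      unfolding norm1_def by (rule sum.cong[OF refl]) (simp add: abs_mult abs_of_pos[OF wpos] abs_of_nonneg[OF apos])
    also have "\<dots> \<ge> (\<Sum>i\<in>UNIV. c * a $ i)"
      by (intro sum_mono mult_right_mono cle apos)
    finally have n1: "norm1 (w * a) \<ge> c * (\<Sum>i\<in>UNIV. a $ i)" by (simp add: sum_distrib_left)
    have sa: "s \<le> 2 * (\<Sum>i\<in>UNIV. a $ i)" unfolding s_def a_def by (rule sum_absD_ge)
    have "c / 2 * s \<le> c / 2 * (2 * (\<Sum>i\<in>UNIV. a $ i))" using sa cpos by (intro mult_left_mono) auto
    hence t1: "norm1 (w * a) \<ge> c / 2 * s" using n1 by simp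
    have "0 \<le> (z - 1)^2" by simp
    hence z2: "z^2 \<ge> 2 * z - 1" by (simp add: power2_eq_square algebra_simps)
    have zt: "z \<ge> norm (K *v x) - norm y\<delta>" unfolding z_def using norm_triangle_ineq2[of "K *v x" y\<delta>] by linarith
    have J: "Jfun K Dh Dv lam \<eta> p \<Psi> y\<delta> x = z^2 + lam * norm1 (w * a)"
      unfolding Jfun_def z_def w_def a_def by simp
    have "lam * norm1 (w * a) \<ge> lam * c / 2 * s"
      using t1 \<open>lam > 0\<close> mult_left_mono[OF t1, of lam] by simp
    hence J2: "Jfun K Dh Dv lam \<eta> p \<Psi> y\<delta> x \<ge> 2 * norm (K *v x) + lam * c / 2 * s - 2 * norm y\<delta> - 1"
      using J z2 zt by linarith
    have s0: "s \<ge> 0" unfolding s_def by simp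
    have "k * norm (K *v x) \<le> 2 * norm (K *v x)" unfolding k_def
      by (simp add: mult_right_mono)
    moreover have "k * s \<le> lam * c / 2 * s"
      by (rule mult_right_mono[OF _ s0]) (simp add: k_def)
    moreover have "\<epsilon> * norm x \<le> norm (K *v x) + s" using epb[rule_format, of x] nf[of x] unfolding s_def
      by linarith
    hence "k * (\<epsilon> * norm x) \<le> k * (norm (K *v x) + s)" using kpos by simp
    ultimately show ?thesis using J2 by (simp add: algebra_simps)
  qed
  show ?thesis unfolding coercive_on_def
  proof
    fix M
    define R where "R = (\<bar>M\<bar> + 2 * norm y\<delta> + 1) / (k * \<epsilon>)"
    have ke: "k * \<epsilon> > 0" using kpos ep by simp
    show "\<exists>R. \<forall>x\<in>nonneg_orthant. R \<le> norm x \<longrightarrow> M \<le> Jfun K Dh Dv lam \<eta> p \<Psi> y\<delta> x"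
    proof (rule exI[of _ R], intro ballI impI)
      fix x :: "real^'n" assume "x \<in> nonneg_orthant" "R \<le> norm x"
      hence "k * \<epsilon> * R \<le> k * \<epsilon> * norm x" using ke by (intro mult_left_mono) auto
      moreover have "k * \<epsilon> * R = \<bar>M\<bar> + 2 * norm y\<delta> + 1" unfolding R_def using kpos ep by simp
      ultimately show "M \<le> Jfun K Dh Dv lam \<eta> p \<Psi> y\<delta> x" using main[of x] by linarith
    qed
  qed
qed

end
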